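(* For all $\Psi\in D(H'_{\mathrm{kin}})$, $$\lim_{R\to\infty}\Big(2\sum_{k\in\overline B(0,R)\cap\mathbb Z^3_*}\sum_{p\in L_k}\lambda_{k,p}b_{k,p}^*b_{k,p}\Psi\Big)=\mathcal N_EH'_{\mathrm{kin}}\Psi.$$
   Context: For $k_F>0$ let $B_F=\overline B(0,k_F)\cap\mathbb Z^3$, $B_F^c=\mathbb Z^3\setminus B_F$, $N=|B_F|$, $\mathbb Z^3_*=\mathbb Z^3\setminus\{0\}$, $\mathcal H_N=\bigwedge^NL^2(\mathbb T^3)$ with $\mathbb T^3=[0,2\pi]^3$, and $c_p,c_p^*$ the fermionic annihilation/creation operators of $u_p(x)=(2\pi)^{-3/2}e^{ip\cdot x}$. On $\mathcal H_N$ let $H'_{\mathrm{kin}}=\sum_{p\in B_F^c}|p|^2c_p^*c_p-\sum_{p\in B_F}|p|^2c_pc_p^*$ with domain $D(H'_{\mathrm{kin}})=\bigwedge^NH^2(\mathbb T^3)$, and $\mathcal N_E=\sum_{p\in B_F^c}c_p^*c_p$. For $k\in\mathbb Z^3_*$: $L_k=\{p\in\mathbb Z^3:|p-k|\le k_F<|p|\}$, $\lambda_{k,p}=\tfrac12(|p|^2-|p-k|^2)$, $b_{k,p}=c_{p-k}^*c_p$. *)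

theory Defs
  imports "HOL-Analysis.Analysis"
begin

(* A state is a coefficient function on subsets S of Z^3: psi S is the coefficient of the
   Slater determinant u_{p_1} /\ ... /\ u_{p_N}, where S = {p_1 < ... < p_N} in the
   lexicographic order on Z^3 (zless below). *)
type_synonym Z3 = "int \<times> int \<times> int"
type_synonym state = "Z3 set \<Rightarrow> complex"

definition zsub :: "Z3 \<Rightarrow> Z3 \<Rightarrow> Z3" where
  "zsub p k = (case p of (a,b,c) \<Rightarrow> case k of (a',b',c') \<Rightarrow> (a - a', b - b', c - c'))"

definition sqn :: "Z3 \<Rightarrow> real" where
  "sqn p = (case p of (a,b,c) \<Rightarrow> real_of_int (a^2 + b^2 + c^2))"

definition znorm :: "Z3 \<Rightarrow> real" where
  "znorm p = sqrt (sqn p)"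

definition fermi_ball :: "real \<Rightarrow> Z3 set" where
  "fermi_ball kF = {p. znorm p \<le> kF}"

definition zless :: "Z3 \<Rightarrow> Z3 \<Rightarrow> bool" where
  "zless q p = (case q of (a,b,c) \<Rightarrow> case p of (a',b',c') \<Rightarrow>
     a < a' \<or> (a = a' \<and> (b < b' \<or> (b = b' \<and> c < c'))))"

(* fermionic sign of moving u_p past the modes of S below p *)
definition fsign :: "Z3 \<Rightarrow> Z3 set \<Rightarrow> complex" where
  "fsign p S = (-1) ^ card {q \<in> S. zless q p}"

definition ann :: "Z3 \<Rightarrow> state \<Rightarrow> state" where
  "ann p \<psi> S = (if p \<in> S then 0 else fsign p S * \<psi> (insert p S))"

definition cre :: "Z3 \<Rightarrow> state \<Rightarrow> state" where
  "cre p \<psi> S = (if p \<in> S then fsign p (S - {p}) * \<psi> (S - {p}) else 0)"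

definition in_HN :: "nat \<Rightarrow> state \<Rightarrow> bool" where
  "in_HN N \<psi> \<longleftrightarrow> (\<forall>S. \<psi> S \<noteq> 0 \<longrightarrow> finite S \<and> card S = N)
      \<and> (\<lambda>S. (cmod (\<psi> S))^2) summable_on UNIV"

(* D(H'_kin) = /\^N H^2(T^3) *)
definition dom_Hkin :: "real \<Rightarrow> state set" where
  "dom_Hkin kF = {\<psi>. in_HN (card (fermi_ball kF)) \<psi>
      \<and> (\<lambda>S. (\<Sum>p\<in>S. sqn p)^2 * (cmod (\<psi> S))^2) summable_on UNIV}"

definition Hkin :: "real \<Rightarrow> state \<Rightarrow> state" where
  "Hkin kF \<psi> S =
     (\<Sum>\<^sub>\<infinity>p\<in>- fermi_ball kF. complex_of_real (sqn p) * cre p (ann p \<psi>) S)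
   - (\<Sum>\<^sub>\<infinity>p\<in>fermi_ball kF. complex_of_real (sqn p) * ann p (cre p \<psi>) S)"

definition NE :: "real \<Rightarrow> state \<Rightarrow> state" where
  "NE kF \<psi> S = (\<Sum>\<^sub>\<infinity>p\<in>- fermi_ball kF. cre p (ann p \<psi>) S)"

definition Lk :: "real \<Rightarrow> Z3 \<Rightarrow> Z3 set" where
  "Lk kF k = {p. znorm (zsub p k) \<le> kF \<and> kF < znorm p}"

definition lam :: "Z3 \<Rightarrow> Z3 \<Rightarrow> real" where
  "lam k p = (sqn p - sqn (zsub p k)) / 2"

definition bop :: "Z3 \<Rightarrow> Z3 \<Rightarrow> state \<Rightarrow> state" where
  "bop k p \<psi> = cre (zsub p k) (ann p \<psi>)"
definition bop_adj :: "Z3 \<Rightarrow> Z3 \<Rightarrow> state \<Rightarrow> state" where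
  "bop_adj k p \<psi> = cre p (ann (zsub p k) \<psi>)"

definition trunc_sum :: "real \<Rightarrow> real \<Rightarrow> state \<Rightarrow> state" where
  "trunc_sum kF R \<psi> S = 2 * (\<Sum>k\<in>{k. k \<noteq> (0,0,0) \<and> znorm k \<le> R}.
        \<Sum>p\<in>Lk kF k. complex_of_real (lam k p) * bop_adj k p (bop k p \<psi>) S)"

(* convergence in the Hilbert space norm (l^2 over the Slater basis) as R \<rightarrow> \<infinity> *)
definition l2_tendsto_at_top :: "(real \<Rightarrow> state) \<Rightarrow> state \<Rightarrow> bool" where
  "l2_tendsto_at_top F G \<longleftrightarrow>
     (\<forall>\<^sub>F R in at_top. (\<lambda>S. (cmod (F R S - G S))^2) summable_on UNIV)
     \<and> ((\<lambda>R. \<Sum>\<^sub>\<infinity>S. (cmod (F R S - G S))^2) \<longlongrightarrow> 0) at_top"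

end

theory Submission
  imports Defs
begin


lemma dom_conv:
  fixes f :: "real \<Rightarrow> 'a \<Rightarrow> real" and g :: "'a \<Rightarrow> real"
  assumes g: "g summable_on UNIV"
    and nn: "\<And>R x. 0 \<le> f R x" and le: "\<And>R x. f R x \<le> g x"
    and ev: "\<And>x. eventually (\<lambda>R. f R x = 0) at_top"
  shows "\<And>R. f R summable_on UNIV" "((\<lambda>R. infsum (f R) UNIV) \<longlongrightarrow> 0) at_top"
proof -
  show sf: "\<And>R. f R summable_on UNIV"
    by (rule summable_on_comparison_test[OF g]) (use le nn in auto)
  show "((\<lambda>R. infsum (f R) UNIV) \<longlongrightarrow> 0) at_top"
  proof (rule tendstoI)
    fix e :: real assume e: "e > 0"
    have "((\<lambda>F. sum g F) \<longlongrightarrow> infsum g UNIV) (finite_subsets_at_top UNIV)"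
      using infsum_tendsto[OF g] .
    hence "eventually (\<lambda>F. dist (sum g F) (infsum g UNIV) < e) (finite_subsets_at_top UNIV)"
      using e tendstoD by blast
    then obtain F where F: "finite F" and Fd: "dist (sum g F) (infsum g UNIV) < e"
      unfolding eventually_finite_subsets_at_top by blast
    have gs: "g summable_on (-F)" using g summable_on_subset_banach by blast
    have "infsum g UNIV = infsum g (-F \<union> F)" by simp
    also have "\<dots> = infsum g (-F) + infsum g F"
      by (rule infsum_Un_disjoint[OF gs]) (use F in auto)
    finally have tail: "infsum g (-F) < e" using Fd F by (simp add: dist_real_def)
    have "eventually (\<lambda>R. \<forall>x\<in>F. f R x = 0) at_top"
      by (rule eventually_ball_finite[OF F]) (use ev in auto)
    thus "eventually (\<lambda>R. dist (infsum (f R) UNIV) 0 < e) at_top"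
    proof eventually_elim
      case (elim R)
      have fs: "f R summable_on (-F)" using sf summable_on_subset_banach by blast
      have "infsum (f R) UNIV = infsum (f R) (-F \<union> F)" by simp
      also have "\<dots> = infsum (f R) (-F) + infsum (f R) F"
        by (rule infsum_Un_disjoint[OF fs]) (use F in auto)
      also have "infsum (f R) F = 0" using elim F by simp
      finally have eq: "infsum (f R) UNIV = infsum (f R) (-F)" by simp
      have "infsum (f R) (-F) \<le> infsum g (-F)"
        by (rule infsum_mono[OF fs gs]) (use le in auto)
      moreover have "0 \<le> infsum (f R) UNIV" by (rule infsum_nonneg) (use nn in auto)
      ultimately show ?case using eq tail by (simp add: dist_real_def)
    qed
  qed
qed


lemma fsign_sq: "fsign p S * fsign p S = 1"
  unfolding fsign_def by (simp add: power_mult_distrib[symmetric])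

lemma cre_ann: "cre p (ann p \<phi>) S = (if p \<in> S then \<phi> S else 0)"
  unfolding cre_def ann_def by (auto simp: insert_absorb fsign_sq mult.assoc[symmetric])

lemma ann_cre: "ann p (cre p \<phi>) S = (if p \<in> S then 0 else \<phi> S)"
  unfolding cre_def ann_def by (auto simp: fsign_sq mult.assoc[symmetric])

lemma zsub_neq: "k \<noteq> (0,0,0) \<Longrightarrow> zsub p k \<noteq> p"
  unfolding zsub_def by (cases p; cases k) auto

lemma bb: assumes "q \<noteq> p" and "q = zsub p k"
  shows "bop_adj k p (bop k p \<phi>) S = (if p \<in> S \<and> q \<notin> S then \<phi> S else 0)"
proof -
  have "bop_adj k p (bop k p \<phi>) S = cre p (ann q (cre q (ann p \<phi>))) S"
    unfolding bop_adj_def bop_def assms(2) ..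
  also have "\<dots> = (if p \<in> S \<and> q \<notin> S then \<phi> S else 0)"
  proof (cases "p \<in> S")
    case True
    have "cre p (ann q (cre q (ann p \<phi>))) S = fsign p (S - {p}) * ann q (cre q (ann p \<phi>)) (S - {p})"
      using True by (simp add: cre_def)
    also have "ann q (cre q (ann p \<phi>)) (S - {p}) = (if q \<in> S then 0 else ann p \<phi> (S - {p}))"
      using assms(1) by (simp add: ann_cre)
    also have "ann p \<phi> (S - {p}) = fsign p (S - {p}) * \<phi> S"
      using True by (simp add: ann_def insert_absorb)
    finally show ?thesis using True by (auto simp: fsign_sq mult.assoc[symmetric])
  next
    case False then show ?thesis by (simp add: cre_def)
  qed
  finally show ?thesis .
qed

lemma finite_ball: "finite {p :: Z3. znorm p \<le> R}"
proof -
  define m where "m = ceiling R"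
  have "{p :: Z3. znorm p \<le> R} \<subseteq> {-m..m} \<times> {-m..m} \<times> {-m..m}"
  proof
    fix p :: Z3 assume "p \<in> {p. znorm p \<le> R}"
    then obtain a b c where p: "p = (a,b,c)" and h: "sqrt (real_of_int (a^2+b^2+c^2)) \<le> R"
      by (cases p) (auto simp: znorm_def sqn_def)
    have 1: "\<bar>x\<bar> \<le> R" if "x^2 \<le> a^2+b^2+c^2" for x :: int
    proof -
      have "sqrt (real_of_int (x^2)) \<le> sqrt (real_of_int (a^2+b^2+c^2))"
        using that by (subst real_sqrt_le_iff) linarith
      thus ?thesis using h by simp
    qed
    have "\<bar>a\<bar> \<le> R" "\<bar>b\<bar> \<le> R" "\<bar>c\<bar> \<le> R" by (rule 1; simp)+
    hence "\<bar>a\<bar> \<le> m" "\<bar>b\<bar> \<le> m" "\<bar>c\<bar> \<le> m" unfolding m_def by linarith+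
    thus "p \<in> {-m..m} \<times> {-m..m} \<times> {-m..m}" using p by auto
  qed
  thus ?thesis by (rule finite_subset) auto
qed


lemma infsum_ca:
  assumes "\<phi> S \<noteq> 0 \<Longrightarrow> finite S"
  shows "(\<Sum>\<^sub>\<infinity>p\<in>A. complex_of_real (w p) * cre p (ann p \<phi>) S) = complex_of_real (\<Sum>p\<in>A\<inter>S. w p) * \<phi> S"
proof (cases "\<phi> S = 0")
  case True thus ?thesis by (simp add: cre_ann infsum_0)
next
  case False
  hence fin: "finite S" using assms by blast
  have "(\<Sum>\<^sub>\<infinity>p\<in>A. complex_of_real (w p) * cre p (ann p \<phi>) S) = (\<Sum>\<^sub>\<infinity>p\<in>A\<inter>S. complex_of_real (w p) * \<phi> S)"
    by (rule infsum_cong_neutral) (auto simp: cre_ann)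
  also have "\<dots> = (\<Sum>p\<in>A\<inter>S. complex_of_real (w p) * \<phi> S)" using fin by simp
  also have "\<dots> = complex_of_real (\<Sum>p\<in>A\<inter>S. w p) * \<phi> S" by (simp add: sum_distrib_right)
  finally show ?thesis .
qed

lemma infsum_ca1:
  assumes "\<phi> S \<noteq> 0 \<Longrightarrow> finite S"
  shows "(\<Sum>\<^sub>\<infinity>p\<in>A. cre p (ann p \<phi>) S) = complex_of_real (real (card (A\<inter>S))) * \<phi> S"
  using infsum_ca[OF assms, where A=A and w="\<lambda>_. 1"] by simp

definition EE :: "real \<Rightarrow> Z3 set \<Rightarrow> real" where
  "EE kF S = (\<Sum>p\<in>S - fermi_ball kF. sqn p) - (\<Sum>p\<in>fermi_ball kF - S. sqn p)"

lemma Hkin_eq: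
  assumes "\<psi> S \<noteq> 0 \<Longrightarrow> finite S"
  shows "Hkin kF \<psi> S = complex_of_real (EE kF S) * \<psi> S"
proof -
  have B: "finite (fermi_ball kF)" unfolding fermi_ball_def by (rule finite_ball)
  have 1: "(\<Sum>\<^sub>\<infinity>p\<in>- fermi_ball kF. complex_of_real (sqn p) * cre p (ann p \<psi>) S)
     = complex_of_real (\<Sum>p\<in>S - fermi_ball kF. sqn p) * \<psi> S"
    using infsum_ca[OF assms, where A="- fermi_ball kF" and w=sqn] by (simp add: Int_commute Diff_eq)
  have "(\<Sum>\<^sub>\<infinity>p\<in>fermi_ball kF. complex_of_real (sqn p) * ann p (cre p \<psi>) S)
     = (\<Sum>p\<in>fermi_ball kF. complex_of_real (if p \<in> S then 0 else sqn p) * \<psi> S)"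
    using B by (auto simp: ann_cre intro!: sum.cong)
  also have "\<dots> = complex_of_real (\<Sum>p\<in>fermi_ball kF. (if p \<in> S then 0 else sqn p)) * \<psi> S"
    by (simp add: sum_distrib_right)
  also have "(\<Sum>p\<in>fermi_ball kF. (if p \<in> S then 0 else sqn p)) = (\<Sum>p\<in>fermi_ball kF - S. sqn p)"
    using B by (simp add: sum.If_cases Diff_eq)
  finally have 2: "(\<Sum>\<^sub>\<infinity>p\<in>fermi_ball kF. complex_of_real (sqn p) * ann p (cre p \<psi>) S)
     = complex_of_real (\<Sum>p\<in>fermi_ball kF - S. sqn p) * \<psi> S" .
  show ?thesis unfolding Hkin_def 1 2 EE_def by (simp add: algebra_simps)
qed

lemma NE_Hkin:
  assumes "\<psi> S \<noteq> 0 \<Longrightarrow> finite S"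
  shows "NE kF (Hkin kF \<psi>) S = complex_of_real (real (card (S - fermi_ball kF)) * EE kF S) * \<psi> S"
proof -
  have "Hkin kF \<psi> S \<noteq> 0 \<Longrightarrow> finite S" using assms Hkin_eq[OF assms] by auto
  from infsum_ca1[where \<phi>="Hkin kF \<psi>" and S=S, OF this, where A="- fermi_ball kF"] show ?thesis
    unfolding NE_def by (simp add: Hkin_eq[OF assms] Int_commute Diff_eq)
qed

definition TT :: "real \<Rightarrow> real \<Rightarrow> Z3 set \<Rightarrow> real" where
  "TT kF R S = (\<Sum>k\<in>{k. k \<noteq> (0,0,0) \<and> znorm k \<le> R}. \<Sum>p\<in>Lk kF k.
      (if p \<in> S \<and> zsub p k \<notin> S then sqn p - sqn (zsub p k) else 0))"

lemma trunc_eq: "trunc_sum kF R \<psi> S = complex_of_real (TT kF R S) * \<psi> S"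
proof -
  have "trunc_sum kF R \<psi> S = 2 * (\<Sum>k\<in>{k. k \<noteq> (0,0,0) \<and> znorm k \<le> R}.
        \<Sum>p\<in>Lk kF k. complex_of_real (if p \<in> S \<and> zsub p k \<notin> S then lam k p else 0) * \<psi> S)"
    unfolding trunc_sum_def
  proof (intro arg_cong[where f="\<lambda>x. 2 * x"] sum.cong refl)
    fix k p assume k: "k \<in> {k. k \<noteq> (0,0,0) \<and> znorm k \<le> R}"
    have "bop_adj k p (bop k p \<psi>) S = (if p \<in> S \<and> zsub p k \<notin> S then \<psi> S else 0)"
      by (rule bb[OF zsub_neq refl]) (use k in auto)
    thus "complex_of_real (lam k p) * bop_adj k p (bop k p \<psi>) S =
         complex_of_real (if p \<in> S \<and> zsub p k \<notin> S then lam k p else 0) * \<psi> S" by simp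
  qed
  also have "\<dots> = (2 * (\<Sum>k\<in>{k. k \<noteq> (0,0,0) \<and> znorm k \<le> R}.
        \<Sum>p\<in>Lk kF k. complex_of_real (if p \<in> S \<and> zsub p k \<notin> S then lam k p else 0))) * \<psi> S"
    by (simp add: sum_distrib_right mult.assoc)
  also have "2 * (\<Sum>k\<in>{k. k \<noteq> (0,0,0) \<and> znorm k \<le> R}.
        \<Sum>p\<in>Lk kF k. complex_of_real (if p \<in> S \<and> zsub p k \<notin> S then lam k p else 0)) = complex_of_real (TT kF R S)"
    unfolding TT_def of_real_sum sum_distrib_left by (intro sum.cong refl) (auto simp: lam_def)
  finally show ?thesis .
qed


lemma zsub_zsub: "zsub p (zsub p q) = q"
  unfolding zsub_def by (cases p; cases q) auto

lemma zsub_back: "zsub (zsub p k) (zsub (0,0,0) k) = p"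
  unfolding zsub_def by (cases p; cases k) auto

lemma zsub_self_iff: "zsub p q = (0,0,0) \<longleftrightarrow> p = q"
  unfolding zsub_def by (cases p; cases q) auto

lemma finite_B: "finite (fermi_ball kF)"
  unfolding fermi_ball_def by (rule finite_ball)

lemma finite_Lk: "finite (Lk kF k)"
proof -
  have "Lk kF k \<subseteq> (\<lambda>q. zsub q (zsub (0,0,0) k)) ` fermi_ball kF"
  proof
    fix p assume "p \<in> Lk kF k"
    hence "zsub p k \<in> fermi_ball kF" by (simp add: Lk_def fermi_ball_def)
    thus "p \<in> (\<lambda>q. zsub q (zsub (0,0,0) k)) ` fermi_ball kF"
      using zsub_back[of p k] by (metis image_eqI)
  qed
  thus ?thesis using finite_B by (meson finite_subset finite_imageI)
qed

lemma sqn_lt: assumes "p \<notin> fermi_ball kF" "q \<in> fermi_ball kF" shows "sqn q < sqn p"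
proof -
  have "sqrt (sqn q) \<le> kF" "\<not> sqrt (sqn p) \<le> kF" using assms unfolding fermi_ball_def znorm_def by auto
  hence "sqrt (sqn q) < sqrt (sqn p)" by linarith
  thus ?thesis by simp
qed

lemma sqn_nn: "0 \<le> sqn p"
  unfolding sqn_def by (cases p) auto

lemma TT_eq:
  assumes fin: "finite S"
  shows "TT kF R S = (\<Sum>p\<in>S - fermi_ball kF. \<Sum>q\<in>{q\<in>fermi_ball kF - S. znorm (zsub p q) \<le> R}. sqn p - sqn q)"
proof -
  let ?B = "fermi_ball kF"
  let ?A = "S - ?B" and ?C = "?B - S"
  let ?K = "{k. k \<noteq> (0,0,0) \<and> znorm k \<le> R}"
  have Kfin: "finite ?K" using finite_ball[of R] by (rule finite_subset[rotated]) auto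
  have Afin: "finite ?A" using fin by simp
  have step1: "(\<Sum>p\<in>Lk kF k. (if p \<in> S \<and> zsub p k \<notin> S then sqn p - sqn (zsub p k) else 0))
     = (\<Sum>p\<in>?A. (if zsub p k \<in> ?C then sqn p - sqn (zsub p k) else 0))" for k
  proof -
    have "(\<Sum>p\<in>Lk kF k. (if p \<in> S \<and> zsub p k \<notin> S then sqn p - sqn (zsub p k) else 0))
        = (\<Sum>p\<in>{p\<in>Lk kF k. p \<in> S \<and> zsub p k \<notin> S}. sqn p - sqn (zsub p k))"
      using finite_Lk by (simp add: sum.inter_filter)
    also have "{p\<in>Lk kF k. p \<in> S \<and> zsub p k \<notin> S} = {p\<in>?A. zsub p k \<in> ?C}"
      by (auto simp: Lk_def fermi_ball_def)
    also have "(\<Sum>p\<in>{p\<in>?A. zsub p k \<in> ?C}. sqn p - sqn (zsub p k))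
       = (\<Sum>p\<in>?A. (if zsub p k \<in> ?C then sqn p - sqn (zsub p k) else 0))"
      by (rule sum.inter_filter[OF Afin])
    finally show ?thesis .
  qed
  have step2: "(\<Sum>k\<in>?K. (if zsub p k \<in> ?C then sqn p - sqn (zsub p k) else 0))
      = (\<Sum>q\<in>{q\<in>?C. znorm (zsub p q) \<le> R}. sqn p - sqn q)" if p: "p \<in> ?A" for p
  proof -
    have "(\<Sum>k\<in>?K. (if zsub p k \<in> ?C then sqn p - sqn (zsub p k) else 0))
        = (\<Sum>k\<in>{k\<in>?K. zsub p k \<in> ?C}. sqn p - sqn (zsub p k))"
      by (rule sum.inter_filter[OF Kfin, symmetric])
    also have "\<dots> = (\<Sum>q\<in>{q\<in>?C. znorm (zsub p q) \<le> R}. sqn p - sqn q)"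
    proof (rule sum.reindex_bij_witness[where i="\<lambda>k. zsub p k" and j="\<lambda>q. zsub p q"])
      fix q assume q: "q \<in> {q\<in>?C. znorm (zsub p q) \<le> R}"
      have "p \<noteq> q" using p q by auto
      thus "zsub p q \<in> {k\<in>?K. zsub p k \<in> ?C}" using q by (auto simp: zsub_zsub zsub_self_iff)
    qed (auto simp: zsub_zsub)
    finally show ?thesis .
  qed
  have "TT kF R S = (\<Sum>k\<in>?K. \<Sum>p\<in>?A. (if zsub p k \<in> ?C then sqn p - sqn (zsub p k) else 0))"
    unfolding TT_def step1 ..
  also have "\<dots> = (\<Sum>p\<in>?A. \<Sum>k\<in>?K. (if zsub p k \<in> ?C then sqn p - sqn (zsub p k) else 0))"
    by (rule sum.swap)
  also have "\<dots> = (\<Sum>p\<in>?A. \<Sum>q\<in>{q\<in>?C. znorm (zsub p q) \<le> R}. sqn p - sqn q)"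
    by (rule sum.cong[OF refl], rule step2)
  finally show ?thesis .
qed

definition CI :: "real \<Rightarrow> Z3 set \<Rightarrow> real" where
  "CI kF S = (\<Sum>p\<in>S - fermi_ball kF. \<Sum>q\<in>fermi_ball kF - S. sqn p - sqn q)"

lemma TT_props:
  assumes fin: "finite S"
  shows "0 \<le> TT kF R S" "TT kF R S \<le> CI kF S" "eventually (\<lambda>R. TT kF R S = CI kF S) at_top"
proof -
  let ?B = "fermi_ball kF"
  let ?A = "S - ?B" and ?C = "?B - S"
  have Cfin: "finite ?C" using finite_B by simp
  have nn: "0 \<le> sqn p - sqn q" if "p \<in> ?A" "q \<in> ?C" for p q
    using sqn_lt[of p kF q] that by auto
  show "0 \<le> TT kF R S" unfolding TT_eq[OF fin]
    by (intro sum_nonneg) (use nn in auto)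
  show "TT kF R S \<le> CI kF S" unfolding TT_eq[OF fin] CI_def
    by (intro sum_mono sum_mono2 Cfin) (use nn in auto)
  have "eventually (\<lambda>R. \<forall>p\<in>?A. \<forall>q\<in>?C. znorm (zsub p q) \<le> R) at_top"
    using fin Cfin by (intro eventually_ball_finite ballI eventually_ge_at_top) auto
  thus "eventually (\<lambda>R. TT kF R S = CI kF S) at_top"
  proof eventually_elim
    case (elim R)
    hence "\<And>p. p \<in> ?A \<Longrightarrow> {q\<in>?C. znorm (zsub p q) \<le> R} = ?C" by auto
    thus ?case unfolding TT_eq[OF fin] CI_def by (intro sum.cong refl) auto
  qed
qed

lemma CI_eq:
  assumes fin: "finite S" and card: "card S = card (fermi_ball kF)"
  shows "CI kF S = real (card (S - fermi_ball kF)) * EE kF S"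
    "CI kF S \<le> real (card (fermi_ball kF)) * (\<Sum>p\<in>S. sqn p)"
proof -
  let ?B = "fermi_ball kF"
  let ?A = "S - ?B" and ?C = "?B - S"
  have Cfin: "finite ?C" using finite_B by simp
  have c1: "card ?A = card S - card (S \<inter> ?B)" using fin by (simp add: card_Diff_subset_Int)
  have c2: "card ?C = card ?B - card (S \<inter> ?B)" using finite_B
    by (simp add: card_Diff_subset_Int Int_commute)
  have cc: "card ?A = card ?C" using c1 c2 card by simp
  have CI2: "CI kF S = real (card ?C) * (\<Sum>p\<in>?A. sqn p) - real (card ?A) * (\<Sum>q\<in>?C. sqn q)"
    unfolding CI_def by (simp add: sum_subtractf sum_distrib_left)
  show "CI kF S = real (card ?A) * EE kF S"
    unfolding CI2 EE_def cc by (simp add: algebra_simps)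
  have "CI kF S \<le> real (card ?C) * (\<Sum>p\<in>?A. sqn p)" unfolding CI2
    using sqn_nn by (simp add: sum_nonneg)
  also have "\<dots> \<le> real (card ?B) * (\<Sum>p\<in>S. sqn p)"
  proof (rule mult_mono)
    show "real (card ?C) \<le> real (card ?B)" using finite_B by (simp add: card_mono)
    show "(\<Sum>p\<in>?A. sqn p) \<le> (\<Sum>p\<in>S. sqn p)" using fin sqn_nn by (intro sum_mono2) auto
  qed (auto simp: sum_nonneg sqn_nn)
  finally show "CI kF S \<le> real (card ?B) * (\<Sum>p\<in>S. sqn p)" .
qed


theorem mainTheorem15:
  fixes kF :: real and \<psi> :: state
  assumes "kF > 0" and "\<psi> \<in> dom_Hkin kF"
  shows "l2_tendsto_at_top (\<lambda>R. trunc_sum kF R \<psi>) (NE kF (Hkin kF \<psi>))"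
proof -
  let ?N = "card (fermi_ball kF)"
  have HN: "\<And>S. \<psi> S \<noteq> 0 \<Longrightarrow> finite S \<and> card S = ?N"
    using assms(2) by (auto simp: dom_Hkin_def in_HN_def)
  have dsum: "(\<lambda>S. (\<Sum>p\<in>S. sqn p)^2 * (cmod (\<psi> S))^2) summable_on UNIV"
    using assms(2) by (auto simp: dom_Hkin_def)
  define f where "f R S = (cmod (trunc_sum kF R \<psi> S - NE kF (Hkin kF \<psi>) S))^2" for R S
  define g where "g S = (real ?N)^2 * ((\<Sum>p\<in>S. sqn p)^2 * (cmod (\<psi> S))^2)" for S
  have fin: "\<psi> S \<noteq> 0 \<Longrightarrow> finite S" for S using HN by blast
  have diff: "trunc_sum kF R \<psi> S - NE kF (Hkin kF \<psi>) S = complex_of_real (TT kF R S - CI kF S) * \<psi> S" for R S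
  proof (cases "\<psi> S = 0")
    case True
    have "NE kF (Hkin kF \<psi>) S = complex_of_real (real (card (S - fermi_ball kF)) * EE kF S) * \<psi> S"
      by (rule NE_Hkin) (use True in simp)
    thus ?thesis using True trunc_eq[of kF R \<psi> S] by simp
  next
    case False
    hence "finite S" "card S = ?N" using HN by auto
    have a: "trunc_sum kF R \<psi> S = complex_of_real (TT kF R S) * \<psi> S" by (rule trunc_eq)
    have b: "NE kF (Hkin kF \<psi>) S = complex_of_real (CI kF S) * \<psi> S"
    proof -
      have "NE kF (Hkin kF \<psi>) S = complex_of_real (real (card (S - fermi_ball kF)) * EE kF S) * \<psi> S"
        by (rule NE_Hkin) (use \<open>finite S\<close> in blast)
      thus ?thesis unfolding CI_eq(1)[OF \<open>finite S\<close> \<open>card S = ?N\<close>] .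
    qed
    show ?thesis unfolding a b of_real_diff left_diff_distrib ..
  qed
  have fe: "f R S = (TT kF R S - CI kF S)^2 * (cmod (\<psi> S))^2" for R S
  proof -
    have "f R S = (\<bar>TT kF R S - CI kF S\<bar> * cmod (\<psi> S))^2"
      unfolding f_def diff norm_mult norm_of_real ..
    also have "\<dots> = (TT kF R S - CI kF S)^2 * (cmod (\<psi> S))^2"
      unfolding power_mult_distrib power2_abs ..
    finally show ?thesis .
  qed
  have g: "g summable_on UNIV" unfolding g_def by (rule summable_on_cmult_right[OF dsum])
  have nn: "0 \<le> f R S" for R S unfolding f_def by simp
  have le: "f R S \<le> g S" for R S
  proof (cases "\<psi> S = 0")
    case True thus ?thesis unfolding fe g_def by simp
  next
    case False
    hence F: "finite S" "card S = ?N" using HN by auto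
    note P = TT_props(1)[OF F(1), of kF R] TT_props(2)[OF F(1), of kF R]
    have C: "CI kF S \<le> real ?N * (\<Sum>p\<in>S. sqn p)" by (rule CI_eq(2)[OF F])
    have "(TT kF R S - CI kF S)^2 = (CI kF S - TT kF R S)^2" by (rule power2_commute)
    also have "\<dots> \<le> (real ?N * (\<Sum>p\<in>S. sqn p))^2"
      by (rule power_mono) (use P C in auto)
    finally have "(TT kF R S - CI kF S)^2 \<le> (real ?N * (\<Sum>p\<in>S. sqn p))^2" .
    hence "(TT kF R S - CI kF S)^2 * (cmod (\<psi> S))^2 \<le> (real ?N * (\<Sum>p\<in>S. sqn p))^2 * (cmod (\<psi> S))^2"
      by (rule mult_right_mono) simp
    thus ?thesis unfolding fe g_def by (simp add: power_mult_distrib)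
  qed
  have ev: "eventually (\<lambda>R. f R S = 0) at_top" for S
  proof (cases "\<psi> S = 0")
    case True thus ?thesis unfolding fe by simp
  next
    case False
    hence F: "finite S" using HN by auto
    show ?thesis using TT_props(3)[OF F, of kF] by eventually_elim (simp add: fe)
  qed
  note DC = dom_conv[of g f, OF g nn le ev]
  show ?thesis unfolding l2_tendsto_at_top_def
  proof
    show "\<forall>\<^sub>F R in at_top. (\<lambda>S. (cmod (trunc_sum kF R \<psi> S - NE kF (Hkin kF \<psi>) S))\<^sup>2) summable_on UNIV"
      using DC(1) unfolding f_def by (intro always_eventually allI)
    show "((\<lambda>R. \<Sum>\<^sub>\<infinity>S. (cmod (trunc_sum kF R \<psi> S - NE kF (Hkin kF \<psi>) S))\<^sup>2) \<longlongrightarrow> 0) at_top"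
      using DC(2) unfolding f_def .
  qed
qed

end
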